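(* Let $n\in\mathbb N^+\cup\{\infty\}$ and let $\xi\in(0,\infty)\setminus\{\sqrt{2k}:k\in\mathbb N^+\}$. For a complex sequence $a=(a_k)_{k=0}^n$ (with $\|a\|_{\mathcal V_n}<\infty$ if $n=\infty$), interpreted as $a_k=\hat v_k(\xi)$, define the data $\tilde S_s=\tilde S_s(\xi)$, $0\le s\le n$, by $$\tilde S_0=\tfrac{\sqrt2}{2}\,\xi\,\hat S^{\mathrm{lin}}_{(1,+1),(1,-1)}(E_0(\xi)),$$ $$\tilde S_s=\sqrt{1+\tfrac{\xi^2}{2s}}\;\hat S^{\mathrm{lin}}_{(s,+1),(0,-1)}(E_s(\xi))\ \text{ if } 0<s<\tfrac{\xi^2}{2},\qquad \tilde S_s=\sqrt{1+\tfrac{\xi^2}{2s}}\;\hat S^{\mathrm{lin}}_{(s,-1),(0,-1)}(E_s(\xi))\ \text{ if } s>\tfrac{\xi^2}{2},$$ where $E_0(\xi)=\sqrt{\xi^2/4+2}$, $E_s(\xi)=\sqrt{\xi^2/4+s+s^2/\xi^2}$ for $s\in\mathbb N^+$, and the linearized scattering coefficients $\hat S^{\mathrm{lin}}$ of the scalar potential are computed with $\hat v_k(\xi_{m}(E)-\xi_p(E))$ replaced by $a_k$ (at these energies $\xi_m(E)-\xi_p(E)=\xi$). Then the linear map $\mathcal L^{\mathrm{lin}}(\xi):(a_k)_{k=0}^n\mapsto(\tilde S_s)_{s=0}^n$ is injective (hence a linear bijection of $\mathbb C^{n+1}$ when $n$ is finite), and there exist constants $C_1,C_2>0$ independent of $\xi$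 and $n$ such that $$C_1\|a\|_{\mathcal V_n}\le\|\tilde S\|_{\mathcal S_n}\le C_2\|a\|_{\mathcal V_n}.$$
   Context: Hermite functions: $\varphi_n(y)=(2^n n!\sqrt\pi)^{-1/2}H_n(y)e^{-y^2/2}$ ($H_n$ the physicists' Hermite polynomials), an orthonormal basis of $L^2(\mathbb R)$; rescaled Hermite functions $\tilde\varphi_k(y)=2^{1/2}\pi^{1/4}\varphi_k(\sqrt2 y)$. Mode indices: $M=\{(n,\pm1):n\in\mathbb N^+\}\cup\{(0,-1)\}$; write $n\pm$ for $(n,\pm1)$. For $E\in\mathbb R$, $M(E)=\{(n,\epsilon)\in M: E^2>2n\}$. For $m=(n,\epsilon_m)\in M(E)$ with $n\ge1$: $\xi_m(E)=\epsilon_m\sqrt{E^2-2n}$ and $\phi_m(y;E)=c_m\big(\sqrt{2n}\,\varphi_{n-1}(y),\,(E-\xi_m(E))\varphi_n(y)\big)^T$ with $c_m=(2n+|E-\xi_m(E)|^2)^{-1/2}$; for $m=(0,-1)$: $\xi_m(E)=-E$, $\phi_m=(0,\varphi_0)^T$. Linearized scattering coefficients: for a bounded, compactly supported, Hermitian-matrix-valued $V(x,y)$, $E\in\mathbb R$ and $m=(n,\epsilon_m),p=(q,\epsilon_p)\in M(E)$, $$\hat S^{\mathrm{lin}}_{m,p}(E;V)=\frac{iE}{\sqrt{E^2-2q}}\iint e^{-i(\xi_m(E)-\xi_p(E))x}\,\overline{\phi_m(y;E)}^T V(x,y)\phi_p(y;E)\,dy\,dx.$$ Scalar potentials: $V(x,y)=\sum_{k=0}^n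 v_k(x)\tilde\varphi_k(y)I_2$ with $v_k$ real-valued, integrable and compactly supported, $\hat v_k(\xi)=\int v_k(x)e^{-i\xi x}dx$; then $\hat S^{\mathrm{lin}}_{m,p}(E)=\frac{iE}{\sqrt{E^2-2q}}\sum_k\hat v_k(\xi_m(E)-\xi_p(E))\int\overline{\phi_m(y;E)}^T\phi_p(y;E)\tilde\varphi_k(y)\,dy$. Norms: for $a=(a_s)_{s=0}^n$, $\|a\|_{\mathcal V_n}=\sum_{s=0}^n|a_s|/\sqrt{s!}$ and $\|a\|_{\mathcal S_n}=\sum_{s=0}^n 2^{s/2}|a_s|/\sqrt{s!}$. *)

theory Defs
  imports "HOL-Analysis.Analysis" "HOL-Library.Extended_Nat"
begin

fun hermiteH :: "nat \<Rightarrow> real \<Rightarrow> real" where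
  "hermiteH 0 y = 1"
| "hermiteH (Suc 0) y = 2 * y"
| "hermiteH (Suc (Suc n)) y = 2 * y * hermiteH (Suc n) y - 2 * real (Suc n) * hermiteH n y"

definition hermite_fun :: "nat \<Rightarrow> real \<Rightarrow> real" where
  "hermite_fun n y = (2 ^ n * fact n * sqrt pi) powr (-1/2) * hermiteH n y * exp (- y\<^sup>2 / 2)"

definition hermite_resc :: "nat \<Rightarrow> real \<Rightarrow> real" where
  "hermite_resc k y = sqrt 2 * pi powr (1/4) * hermite_fun k (sqrt 2 * y)"

text \<open>Modes are pairs (n, eps) with eps in {1,-1}; (0,-1) is the special mode.\<close>
type_synonym mode = "nat \<times> int"

definition mode_xi :: "mode \<Rightarrow> real \<Rightarrow> real" where
  "mode_xi m E = (if fst m = 0 then - E else of_int (snd m) * sqrt (E\<^sup>2 - 2 * real (fst m)))"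

definition mode_fun :: "mode \<Rightarrow> real \<Rightarrow> real \<Rightarrow> real \<times> real" where
  "mode_fun m E y =
     (if fst m = 0 then (0, hermite_fun 0 y)
      else (let n = fst m; c = (2 * real n + \<bar>E - mode_xi m E\<bar>\<^sup>2) powr (-1/2)
            in (c * sqrt (2 * real n) * hermite_fun (n - 1) y,
                c * (E - mode_xi m E) * hermite_fun n y)))"

text \<open>conj(phi_m)^T phi_p (phi real-valued).\<close>
definition mode_inner :: "mode \<Rightarrow> mode \<Rightarrow> real \<Rightarrow> real \<Rightarrow> real" where
  "mode_inner m p E y = fst (mode_fun m E y) * fst (mode_fun p E y) + snd (mode_fun m E y) * snd (mode_fun p E y)"

text \<open>Linearized scattering coefficient of the scalar potential sum_{k<=n} v_k(x) tilde phi_k(y) I_2,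
  with hat v_k(xi_m(E) - xi_p(E)) replaced by a k.\<close>
definition Slin :: "enat \<Rightarrow> (nat \<Rightarrow> complex) \<Rightarrow> mode \<Rightarrow> mode \<Rightarrow> real \<Rightarrow> complex" where
  "Slin n a m p E =
     \<i> * complex_of_real (E / sqrt (E\<^sup>2 - 2 * real (fst p))) *
     (\<Sum>k. if enat k \<le> n
           then a k * complex_of_real (LBINT y. mode_inner m p E y * hermite_resc k y)
           else 0)"

definition E0 :: "real \<Rightarrow> real" where
  "E0 \<xi> = sqrt (\<xi>\<^sup>2 / 4 + 2)"

definition Es :: "real \<Rightarrow> nat \<Rightarrow> real" where
  "Es \<xi> s = sqrt (\<xi>\<^sup>2 / 4 + real s + (real s)\<^sup>2 / \<xi>\<^sup>2)"

definition Stilde :: "real \<Rightarrow> enat \<Rightarrow> (nat \<Rightarrow> complex) \<Rightarrow> nat \<Rightarrow> complex" where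
  "Stilde \<xi> n a s =
     (if s = 0 then complex_of_real (sqrt 2 / 2 * \<xi>) * Slin n a (1, 1) (1, -1) (E0 \<xi>)
      else if real s < \<xi>\<^sup>2 / 2
      then complex_of_real (sqrt (1 + \<xi>\<^sup>2 / (2 * real s))) * Slin n a (s, 1) (0, -1) (Es \<xi> s)
      else complex_of_real (sqrt (1 + \<xi>\<^sup>2 / (2 * real s))) * Slin n a (s, -1) (0, -1) (Es \<xi> s))"

text \<open>The norms (as extended nonnegative reals, so that n = infinity is covered).\<close>
definition normV :: "enat \<Rightarrow> (nat \<Rightarrow> complex) \<Rightarrow> ennreal" where
  "normV n a = (\<Sum>s. if enat s \<le> n then ennreal (cmod (a s) / sqrt (fact s)) else 0)"

definition normS :: "enat \<Rightarrow> (nat \<Rightarrow> complex) \<Rightarrow> ennreal" where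
  "normS n b = (\<Sum>s. if enat s \<le> n then ennreal (2 powr (real s / 2) * cmod (b s) / sqrt (fact s)) else 0)"

end

theory Submission
  imports Defs "HOL-Probability.Distributions" "HOL-Computational_Algebra.Polynomial"
begin


fun hp :: "real \<Rightarrow> nat \<Rightarrow> real poly" where
  "hp c 0 = 1"
| "hp c (Suc 0) = [:0, 2*c:]"
| "hp c (Suc (Suc k)) = [:0, 2*c:] * hp c (Suc k) - smult (2 * real (Suc k)) (hp c k)"

lemma poly_hp: "poly (hp c k) y = hermiteH k (c * y)"
  by (induction c k rule: hp.induct) (auto simp: algebra_simps)

lemma pderiv_X2: "pderiv [:0, a:] = [:a:]"
  by (simp add: pderiv_pCons)

lemma pderiv_hp: "pderiv (hp c (Suc k)) = smult (2 * c * real (Suc k)) (hp c k)"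
proof (induction k rule: nat_less_induct)
  case (1 k)
  show ?case
  proof (cases k)
    case 0 then show ?thesis by (simp add: pderiv_pCons)
  next
    case (Suc j)
    have ih: "pderiv (hp c (Suc j)) = smult (2 * c * real (Suc j)) (hp c j)" using 1 \<open>k = Suc j\<close> by auto
    have "pderiv (hp c (Suc k)) = [:2*c:] * hp c (Suc j) + [:0, 2*c:] * pderiv (hp c (Suc j))
          - smult (2 * real (Suc j)) (pderiv (hp c j))"
      using Suc by (simp only: hp.simps(3) pderiv_mult pderiv_diff pderiv_smult pderiv_X2) simp
    also have "\<dots> = smult (2*c) (hp c (Suc j)) + smult (2 * c * real (Suc j)) (hp c (Suc j))"
    proof (cases j)
      case 0
      then show ?thesis using ih by (simp add: algebra_simps)
    next
      case (Suc i)
      have ih2: "pderiv (hp c j) = smult (2 * c * real j) (hp c i)" using 1 \<open>k = Suc j\<close> Suc by auto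
      have e: "hp c (Suc j) = [:0, 2*c:] * hp c j - smult (2 * real j) (hp c i)" using Suc by simp
      have "smult (2 * c * real (Suc j)) (hp c (Suc j)) = [:0, 2*c:] * smult (2 * c * real (Suc j)) (hp c j)
          - smult (2 * real (Suc j)) (smult (2 * c * real j) (hp c i))"
        by (subst e) (simp add: algebra_simps smult_diff_right)
      then show ?thesis using ih ih2 by (simp add: smult_add_right)
    qed
    also have "\<dots> = smult (2 * c * real (Suc k)) (hp c k)"
      using Suc by (simp add: algebra_simps smult_add_left[symmetric])
    finally show ?thesis .
  qed
qed



definition nd :: "real \<Rightarrow> real" where "nd = normal_density 0 (1/2)"
definition Phi :: "real poly \<Rightarrow> real" where "Phi p = (LBINT y. nd y * poly p y)"

lemma int_mom: "integrable lborel (\<lambda>y. nd y * y ^ k)"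
  using integrable_normal_moment[of "1/2" 0 k] by (simp add: nd_def)

lemma int_Phi: "integrable lborel (\<lambda>y. nd y * poly p y)"
proof -
  have "integrable lborel (\<lambda>y. \<Sum>i\<le>degree p. coeff p i * (nd y * y ^ i))"
    apply (rule Bochner_Integration.integrable_sum)
    apply (rule integrable_mult_right)
    by (rule int_mom)
  moreover have "(\<lambda>y. \<Sum>i\<le>degree p. coeff p i * (nd y * y ^ i)) = (\<lambda>y. nd y * poly p y)"
    by (auto simp: poly_altdef sum_distrib_left algebra_simps)
  ultimately show ?thesis by simp
qed

lemma Phi_add: "Phi (p + q) = Phi p + Phi q"
  unfolding Phi_def by (simp add: distrib_left int_Phi)

lemma Phi_diff: "Phi (p - q) = Phi p - Phi q"
  unfolding Phi_def by (simp add: right_diff_distrib int_Phi)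

lemma Phi_smult: "Phi (smult c p) = c * Phi p"
  unfolding Phi_def by (simp add: algebra_simps)

lemma Phi_sum: "Phi (\<Sum>i\<in>I. f i) = (\<Sum>i\<in>I. Phi (f i))"
  unfolding Phi_def by (simp add: poly_sum sum_distrib_left int_Phi)

definition mo :: "nat \<Rightarrow> real" where
  "mo j = (if even j then fact j / (8 ^ (j div 2) * fact (j div 2)) else 0)"

lemma Phi_monom: "Phi (monom c j) = c * mo j"
proof -
  have "Phi (monom c j) = c * (LBINT y. nd y * y ^ j)"
    unfolding Phi_def by (simp add: poly_monom algebra_simps)
  also have "(LBINT y. nd y * y ^ j) = mo j"
  proof (cases "even j")
    case True
    then obtain k where j: "j = 2 * k" by auto
    have "(LBINT y. nd y * y ^ j) = fact (2 * k) / ((2 / (1/2)\<^sup>2)^k * fact k)"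
      using integral_normal_moment_even[of "1/2" 0 k] by (simp add: nd_def j)
    then show ?thesis by (simp add: mo_def j power2_eq_square)
  next
    case False
    then obtain k where j: "j = 2 * k + 1" using oddE by blast
    have "(LBINT y. nd y * y ^ j) = 0"
      using integral_normal_moment_odd[of "1/2" 0 k] by (simp add: nd_def j)
    then show ?thesis by (simp add: mo_def j)
  qed
  finally show ?thesis .
qed

lemma mo_even: "mo (2*k) = fact (2*k) / (8^k * fact k)"
  by (simp add: mo_def)

lemma mo_rec: "real i * mo (i - 1) = 4 * mo (Suc i)"
proof (cases "even i")
  case True then show ?thesis by (cases i) (auto simp: mo_def)
next
  case False
  then obtain k where i: "i = 2 * k + 1" using oddE by blast
  have a: "Suc i = 2 * (k+1)" using i by simp
  have f1: "fact (2 * (k+1)) = (real (2*k+2) * real (2*k+1)) * (fact (2*k) :: real)"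
    by (simp add: algebra_simps)
  have f2: "fact (k+1) = real (k+1) * (fact k :: real)" by simp
  have p: "(8::real) ^ k * fact k > 0" by simp
  have q: "real k + 1 > 0" by simp
  have eq: "4 * (fact (2 * (k+1)) / (8 ^ (k+1) * fact (k+1))) = real (2*k+1) * (fact (2*k) / (8 ^ k * (fact k::real)))"
    unfolding f1 f2 using p q by (simp add: divide_simps)
  have "real i * mo (i-1) = real (2*k+1) * mo (2*k)" using i by simp
  also have "\<dots> = 4 * mo (2*(k+1))" unfolding mo_even[of k] mo_even[of "k+1"] using eq by (rule sym)
  also have "\<dots> = 4 * mo (Suc i)" using a by simp
  finally show ?thesis .
qed

lemma Phi_byparts: "Phi (pderiv f) = Phi ([:0, 4:] * f)"
proof -
  have f: "f = (\<Sum>i\<le>degree f. monom (coeff f i) i)" by (rule poly_as_sum_of_monoms[symmetric])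
  have "Phi (pderiv f) = (\<Sum>i\<le>degree f. Phi (pderiv (monom (coeff f i) i)))"
    by (subst f) (simp add: higher_pderiv_sum[where n=1, simplified] Phi_sum)
  also have "\<dots> = (\<Sum>i\<le>degree f. Phi ([:0,4:] * monom (coeff f i) i))"
  proof (rule sum.cong[OF refl])
    fix i
    have "[:0,4:] * monom (coeff f i) i = monom (4 * coeff f i) (Suc i)"
    proof -
      have "[:0,4:] = smult 4 [:0,1::real:]" by simp
      then show ?thesis by (simp add: monom_altdef mult.commute)
    qed
    then show "Phi (pderiv (monom (coeff f i) i)) = Phi ([:0, 4:] * monom (coeff f i) i)"
      using mo_rec[of i] by (simp add: pderiv_monom Phi_monom algebra_simps)
  qed
  also have "\<dots> = Phi ([:0, 4:] * f)"
    by (subst (2) f) (simp add: Phi_sum sum_distrib_left)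
  finally show ?thesis .
qed



lemma Phi_one: "Phi 1 = 1"
  unfolding Phi_def nd_def by simp

lemma hp_rec: "c \<noteq> 0 \<Longrightarrow> hp c (Suc k) = [:0, 2*c:] * hp c k - smult (1/c) (pderiv (hp c k))"
proof (cases k)
  case 0 then show ?thesis by simp
next
  case (Suc j)
  assume c: "c \<noteq> 0"
  have "smult (1/c) (smult (2*c*real (Suc j)) (hp c j)) = smult (2*real (Suc j)) (hp c j)"
    using c by simp
  then show ?thesis using c unfolding Suc pderiv_hp by simp
qed

lemma Phi_q_step: "Phi (p * hp (sqrt 2) (Suc k)) = (1 / sqrt 2) * Phi (pderiv p * hp (sqrt 2) k)"
proof -
  let ?q = "hp (sqrt 2) k"
  define X where "X = Phi ([:0,1:] * p * ?q)"
  define Y where "Y = Phi (p * pderiv ?q)"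
  define Z where "Z = Phi (pderiv p * ?q)"
  have bp: "Z + Y = 4 * X"
  proof -
    have "Z + Y = Phi (pderiv (p * ?q))" unfolding Z_def Y_def by (simp add: pderiv_mult Phi_add ac_simps)
    also have "\<dots> = Phi ([:0,4:] * (p * ?q))" by (rule Phi_byparts)
    also have "[:0,4:] * (p * ?q) = smult 4 ([:0,1:] * p * ?q)"
    proof -
      have "[:0,4:] = smult 4 [:0,1::real:]" by simp
      then show ?thesis by (simp add: mult.assoc)
    qed
    finally show ?thesis unfolding X_def by (simp only: Phi_smult)
  qed
  have "p * hp (sqrt 2) (Suc k) = smult (2 * sqrt 2) ([:0,1:] * p * ?q) - smult (1 / sqrt 2) (p * pderiv ?q)"
  proof -
    have "[:0, 2 * sqrt 2:] = smult (2 * sqrt 2) [:0,1::real:]" by simp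
    then show ?thesis by (subst hp_rec) (simp_all add: algebra_simps)
  qed
  then have "Phi (p * hp (sqrt 2) (Suc k)) = 2 * sqrt 2 * X - (1 / sqrt 2) * Y"
    unfolding X_def Y_def by (simp only: Phi_diff Phi_smult)
  also have "\<dots> = (1 / sqrt 2) * Z"
  proof -
    have Y: "Y = 4 * X - Z" using bp by simp
    have s: "sqrt 2 * sqrt 2 = (2::real)" by simp
    show ?thesis unfolding Y by (simp add: field_simps s)
  qed
  finally show ?thesis unfolding Z_def .
qed

lemma Phi_q: "Phi (p * hp (sqrt 2) k) = (1 / sqrt 2) ^ k * Phi ((pderiv ^^ k) p)"
proof (induction k arbitrary: p)
  case 0 then show ?case by simp
next
  case (Suc k)
  show ?case by (simp add: Phi_q_step Suc funpow_Suc_right del: funpow.simps)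
qed

definition cf :: "nat \<Rightarrow> real" where
  "cf j = (if even j then (-1/2) ^ (j div 2) / fact (j div 2) else 0)"

lemma Phi_X: "Phi [:0, a:] = 0"
proof -
  have "Phi (pderiv 1) = Phi ([:0,4:] * 1)" by (rule Phi_byparts)
  then have "Phi [:0,4:] = 0" by (simp add: Phi_def)
  moreover have e: "[:0,a:] = smult (a/4) [:0,4:]" by simp
  have "Phi [:0,a:] = (a/4) * Phi [:0,4:]" by (subst e) (rule Phi_smult)
  ultimately show ?thesis by simp
qed

lemma Phi_h_step: "Phi (hp 1 (Suc (Suc m))) = - real (Suc m) * Phi (hp 1 m)"
proof -
  have a: "Phi ([:0,2:] * hp 1 (Suc m)) = real (Suc m) * Phi (hp 1 m)"
  proof -
    have "[:0,2:] * hp 1 (Suc m) = smult (1/2) ([:0,4:] * hp 1 (Suc m))"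
    proof -
      have "[:0,2:] = smult (1/2) [:0,4::real:]" by simp
      then show ?thesis by simp
    qed
    then have "Phi ([:0,2:] * hp 1 (Suc m)) = (1/2) * Phi ([:0,4:] * hp 1 (Suc m))"
      by (simp only: Phi_smult)
    then have "Phi ([:0,2:] * hp 1 (Suc m)) = (1/2) * Phi (pderiv (hp 1 (Suc m)))"
      by (simp only: Phi_byparts)
    also have "\<dots> = 1/2 * (2 * 1 * real (Suc m) * Phi (hp 1 m))"
      by (simp only: pderiv_hp Phi_smult)
    also have "\<dots> = real (Suc m) * Phi (hp 1 m)" by simp
    finally show ?thesis .
  qed
  show ?thesis by (simp only: hp.simps(3) mult_1_right Phi_diff Phi_smult a)
qed

lemma Phi_h: "Phi (hp 1 j) = fact j * cf j"
proof (induction j rule: nat_less_induct)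
  case (1 j)
  show ?case
  proof (cases j)
    case 0 then show ?thesis by (simp add: Phi_one cf_def)
  next
    case (Suc i)
    show ?thesis
    proof (cases i)
      case 0 then show ?thesis using Suc by (simp add: Phi_X cf_def)
    next
      case (Suc m)
      have ih: "Phi (hp 1 m) = fact m * cf m" using 1 \<open>j = Suc i\<close> Suc by auto
      have "Phi (hp 1 j) = - real (Suc m) * (fact m * cf m)"
        using \<open>j = Suc i\<close> Suc Phi_h_step ih by simp
      also have "\<dots> = fact j * cf j"
      proof (cases "even m")
        case True
        then obtain r where m: "m = 2 * r" by auto
        have j: "j = 2 * (r + 1)" using \<open>j = Suc i\<close> Suc m by simp
        have c1: "cf (2*(r+1)) = (-1/2)^(r+1)/fact(r+1)" by (simp add: cf_def)
        have c0: "cf m = (-1/2)^r/fact r" by (simp add: cf_def m)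
        have f1: "fact (2*(r+1)) = (real (2*r+2) * real (2*r+1)) * (fact (2*r) :: real)"
          by (simp add: algebra_simps)
        have f2: "fact (r+1) = real (r+1) * (fact r :: real)" by simp
        show ?thesis unfolding j c1 c0 f1 f2 unfolding m
          by (simp add: divide_simps) (simp add: algebra_simps)

      next
        case False
        then have "odd j" using \<open>j = Suc i\<close> Suc by simp
        then show ?thesis using False by (simp add: cf_def)
      qed
      finally show ?thesis .
    qed
  qed
qed

lemma pderiv_pow_h: "(pderiv ^^ k) (hp 1 s) = (if k \<le> s then smult (2^k * fact s / fact (s-k)) (hp 1 (s-k)) else 0)"
proof (induction k)
  case 0 then show ?case by simp
next
  case (Suc k)
  show ?case
  proof (cases "Suc k \<le> s")
    case True
    then obtain r where s: "s - k = Suc r" by (metis Suc_diff_le diff_Suc_Suc minus_nat.diff_0)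
    have r: "s - Suc k = r" using s by simp
    have "(pderiv ^^ Suc k) (hp 1 s) = pderiv (smult (2^k * fact s / fact (s-k)) (hp 1 (s-k)))"
      using Suc True by simp
    also have "\<dots> = smult (2^k * fact s / fact (Suc r) * (2 * real (Suc r))) (hp 1 r)"
      unfolding s by (simp add: pderiv_smult pderiv_hp)
    also have "2^k * fact s / fact (Suc r) * (2 * real (Suc r)) = (2^Suc k * fact s / fact r :: real)"
      by (simp add: divide_simps)
    finally show ?thesis using True r by simp
  next
    case False
    show ?thesis
    proof (cases "k = s")
      case True
      then show ?thesis using Suc by (simp add: pderiv_smult)
    next
      case False
      then show ?thesis using Suc \<open>\<not> Suc k \<le> s\<close> by simp
    qed
  qed
qed

lemma K_val: "Phi (hp 1 s * hp (sqrt 2) k) = (if k \<le> s then sqrt 2 ^ k * fact s * cf (s - k) else 0)"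
proof -
  have "Phi (hp 1 s * hp (sqrt 2) k) = (1 / sqrt 2) ^ k * Phi ((pderiv ^^ k) (hp 1 s))" by (rule Phi_q)
  also have "\<dots> = (if k \<le> s then sqrt 2 ^ k * fact s * cf (s - k) else 0)"
  proof (cases "k \<le> s")
    case True
    have "(1 / sqrt 2) ^ k * 2 ^ k = (sqrt 2 ^ k :: real)"
    proof -
      have "(2::real) ^ k = sqrt 2 ^ k * sqrt 2 ^ k" by (simp flip: power_mult_distrib)
      then show ?thesis by (simp add: power_divide)
    qed
    then show ?thesis using True by (simp add: pderiv_pow_h Phi_smult Phi_h)
  next
    case False then show ?thesis by (simp add: pderiv_pow_h Phi_def)
  qed
  finally show ?thesis .
qed

lemma K0_val: "Phi ([:1,0,2:] * hp (sqrt 2) k) = (if k = 0 then 3/2 else if k = 2 then 2 else 0)"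
proof -
  have P: "Phi [:0,0,2:] = 1/2"
  proof -
    have "Phi (pderiv [:0,1:]) = Phi ([:0,4:] * [:0,1:])" by (rule Phi_byparts)
    moreover have "pderiv [:0,1::real:] = 1" by (simp add: pderiv_pCons)
    ultimately have "Phi [:0,0,4:] = 1" by (simp add: Phi_one)
    moreover have e: "[:0,0,2:] = smult (1/2) [:0,0,4::real:]" by simp
    have "Phi [:0,0,2:] = (1/2) * Phi [:0,0,4:]" by (subst e) (rule Phi_smult)
    ultimately show ?thesis by simp
  qed
  have p: "Phi [:1,0,2:] = 3/2"
  proof -
    have "[:1,0,2:] = 1 + [:0,0,2::real:]" by (simp only: pCons_one[symmetric] add_pCons) simp
    then show ?thesis by (simp add: Phi_add Phi_one P)
  qed
  have d3: "(pderiv ^^ 3) [:1,0,2::real:] = 0" by (simp add: numeral_3_eq_3 pderiv_pCons)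
  have "Phi ([:1,0,2:] * hp (sqrt 2) k) = (1 / sqrt 2) ^ k * Phi ((pderiv ^^ k) [:1,0,2:])" by (rule Phi_q)
  also have "\<dots> = (if k = 0 then 3/2 else if k = 2 then 2 else 0)"
  proof -
    have "k = 0 \<or> k = 1 \<or> k = 2 \<or> (\<exists>j. k = j + 3)" by presburger
    then consider "k = 0" | "k = 1" | "k = 2" | j where "k = j + 3" by blast
    then show ?thesis
    proof cases
      case 1 then show ?thesis using p by simp
    next
      case 2 then show ?thesis by (simp add: pderiv_pCons Phi_X)
    next
      case 3
      have "Phi [:4:] = 4" using Phi_smult[of 4 1] Phi_one by simp
      then show ?thesis using 3 by (simp add: numeral_2_eq_2 pderiv_pCons)
    next
      case 4
      have "(pderiv ^^ k) [:1,0,2::real:] = 0" unfolding 4 funpow_add comp_def d3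
        by (induction j) auto
      then show ?thesis using 4 by (simp add: Phi_def)
    qed
  qed
  finally show ?thesis .
qed



definition rho :: real where "rho = pi powr (1/4)"
definition R :: "nat \<Rightarrow> real" where "R j = sqrt (2 ^ j * fact j)"

lemma rho_pos: "rho > 0" unfolding rho_def by simp
lemma rho_sq: "rho * rho = sqrt pi"
  unfolding rho_def by (simp add: powr_add[symmetric] powr_half_sqrt)
lemma R_pos: "R j > 0" unfolding R_def by simp
lemma R0: "R 0 = 1" unfolding R_def by simp

lemma Nf: "(2 ^ j * fact j * sqrt pi) powr (-1/2) = 1 / (R j * rho)"
proof -
  have "(2 ^ j * fact j * sqrt pi) powr (-1/2) = (2 ^ j * fact j) powr (-1/2) * (sqrt pi) powr (-1/2)"
    by (rule powr_mult)
  also have "(2 ^ j * fact j :: real) powr (-1/2) = 1 / R j"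
    unfolding R_def by (simp add: powr_minus_divide powr_half_sqrt)
  also have "(sqrt pi) powr (-1/2) = 1 / rho"
  proof -
    have "sqrt pi = pi powr (1/2)" by (simp add: powr_half_sqrt)
    then have "(sqrt pi) powr (1/2) = rho" unfolding rho_def by (simp add: powr_powr)
    then show ?thesis by (simp add: powr_minus_divide)
  qed
  finally show ?thesis by simp
qed

lemma hf: "hermite_fun j y = poly (hp 1 j) y * exp (-y\<^sup>2/2) / (R j * rho)"
  unfolding hermite_fun_def Nf by (simp add: poly_hp)

lemma hr: "hermite_resc k y = sqrt 2 * poly (hp (sqrt 2) k) y * exp (-y\<^sup>2/2) ^ 2 / R k"
proof -
  have e: "exp (- (sqrt 2 * y)\<^sup>2 / 2) = exp (-y\<^sup>2/2) ^ 2"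
    by (simp add: power_mult_distrib flip: exp_of_nat_mult)
  show ?thesis unfolding hermite_resc_def hf poly_hp e using rho_pos
    by (simp add: field_simps rho_def)
qed

lemma ndv: "nd y = sqrt 2 / (rho * rho) * exp (-y\<^sup>2/2) ^ 4"
proof -
  have "nd y = 1 / sqrt (pi / 2) * exp (- (y\<^sup>2 * 2))"
    unfolding nd_def normal_density_def by (simp add: power2_eq_square field_simps)
  also have "exp (- (y\<^sup>2 * 2)) = exp (-y\<^sup>2/2) ^ 4"
    by (simp flip: exp_of_nat_mult)
  also have "1 / sqrt (pi / 2) = sqrt 2 / (rho * rho)"
    unfolding rho_sq by (simp add: real_sqrt_divide)
  finally show ?thesis .
qed

definition CCf :: "nat \<Rightarrow> int \<Rightarrow> real \<Rightarrow> real" where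
  "CCf s e E = (2 * real s + \<bar>E - mode_xi (s, e) E\<bar>\<^sup>2) powr (-1/2) * (E - mode_xi (s, e) E)"

lemma pt_s:
  assumes "s \<noteq> 0"
  shows "mode_inner (s, e) (0, -1) E y * hermite_resc k y
       = CCf s e E / (R s * R k) * (nd y * poly (hp 1 s * hp (sqrt 2) k) y)"
proof -
  have r2: "rho * rho = sqrt pi" by (rule rho_sq)
  show ?thesis
    using assms rho_pos R_pos[of s] R_pos[of k]
    unfolding mode_inner_def mode_fun_def CCf_def ndv hr
    by (simp add: Let_def hf R0 poly_mult field_simps eval_nat_numeral)
qed

lemma int_s:
  assumes "s \<noteq> 0"
  shows "(LBINT y. mode_inner (s, e) (0, -1) E y * hermite_resc k y)
       = CCf s e E / (R s * R k) * Phi (hp 1 s * hp (sqrt 2) k)"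
  unfolding pt_s[OF assms] Phi_def by simp



definition Cpf :: "int \<Rightarrow> real \<Rightarrow> real" where
  "Cpf e E = (2 * real (1::nat) + \<bar>E - mode_xi (1, e) E\<bar>\<^sup>2) powr (-1/2)"

lemma pt_0:
  assumes d: "(E - mode_xi (1, 1) E) * (E - mode_xi (1, -1) E) = 2"
  shows "mode_inner (1, 1) (1, -1) E y * hermite_resc k y
       = 2 * Cpf 1 E * Cpf (-1) E / R k * (nd y * poly ([:1,0,2:] * hp (sqrt 2) k) y)"
proof -
  have "mode_inner (1, 1) (1, -1) E y = Cpf 1 E * Cpf (-1) E *
     (2 * hermite_fun 0 y ^ 2 + ((E - mode_xi (1, 1) E) * (E - mode_xi (1, -1) E)) * hermite_fun 1 y ^ 2)"
    unfolding mode_inner_def mode_fun_def Cpf_def by (simp add: Let_def algebra_simps power2_eq_square)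
  also have "\<dots> = Cpf 1 E * Cpf (-1) E * (2 * hermite_fun 0 y ^ 2 + 2 * hermite_fun 1 y ^ 2)"
    unfolding d ..
  finally have mi: "mode_inner (1, 1) (1, -1) E y = Cpf 1 E * Cpf (-1) E * (2 * hermite_fun 0 y ^ 2 + 2 * hermite_fun 1 y ^ 2)" .
  have R1: "R (Suc 0) = sqrt 2" unfolding R_def by simp
  have r2: "rho * rho = sqrt pi" by (rule rho_sq)
  show ?thesis
    unfolding mi hf ndv hr using rho_pos R_pos[of k]
    by (simp add: R0 R1 poly_mult field_simps eval_nat_numeral)
qed

lemma int_0:
  assumes d: "(E - mode_xi (1, 1) E) * (E - mode_xi (1, -1) E) = 2"
  shows "(LBINT y. mode_inner (1, 1) (1, -1) E y * hermite_resc k y)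
       = 2 * Cpf 1 E * Cpf (-1) E / R k * Phi ([:1,0,2:] * hp (sqrt 2) k)"
  unfolding pt_0[OF assms] Phi_def by simp

lemma suminf_fin:
  fixes f :: "nat \<Rightarrow> complex"
  assumes "\<And>k. k > M \<Longrightarrow> f k = 0"
  shows "suminf f = (\<Sum>k\<le>M. f k)"
  by (rule suminf_finite) (auto simp: assms not_le)



definition AA :: "enat \<Rightarrow> (nat \<Rightarrow> complex) \<Rightarrow> nat \<Rightarrow> complex" where
  "AA n a k = (if enat k \<le> n then a k else 0)"

lemma Slin_eq:
  assumes I: "\<And>k. (LBINT y. mode_inner m p E y * hermite_resc k y) = c * Y k"
    and Z: "\<And>k. k > M \<Longrightarrow> Y k = 0"
  shows "Slin n a m p E = \<i> * complex_of_real (E / sqrt (E\<^sup>2 - 2 * real (fst p)) * c) * (\<Sum>k\<le>M. AA n a k * complex_of_real (Y k))"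
proof -
  have "(\<lambda>k. if enat k \<le> n then a k * complex_of_real (LBINT y. mode_inner m p E y * hermite_resc k y) else 0)
      = (\<lambda>k. complex_of_real c * (AA n a k * complex_of_real (Y k)))"
    by (auto simp: I AA_def fun_eq_iff)
  moreover have "suminf (\<lambda>k. complex_of_real c * (AA n a k * complex_of_real (Y k))) =
      (\<Sum>k\<le>M. complex_of_real c * (AA n a k * complex_of_real (Y k)))"
    by (rule suminf_fin) (simp add: Z)
  ultimately show ?thesis unfolding Slin_def by (simp add: sum_distrib_left[symmetric] mult.assoc)
qed

lemma E0_facts:
  assumes "\<xi> > 0"
  shows "E0 \<xi> > 0" "(E0 \<xi>)\<^sup>2 = \<xi>\<^sup>2/4 + 2"
    "mode_xi (1, 1) (E0 \<xi>) = \<xi>/2" "mode_xi (1, -1) (E0 \<xi>) = -\<xi>/2"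
    "sqrt ((E0 \<xi>)\<^sup>2 - 2 * real (fst (1::nat, -1::int))) = \<xi>/2"
proof -
  have nn: "0 \<le> \<xi>\<^sup>2/4" by simp
  show p: "E0 \<xi> > 0" unfolding E0_def using nn by (intro real_sqrt_gt_zero) linarith
  show q: "(E0 \<xi>)\<^sup>2 = \<xi>\<^sup>2/4 + 2" unfolding E0_def by (simp add: add_nonneg_nonneg)
  have s: "sqrt ((E0 \<xi>)\<^sup>2 - 2) = \<xi>/2"
  proof -
    have "(E0 \<xi>)\<^sup>2 - 2 = (\<xi>/2)\<^sup>2" using q by (simp add: power_divide)
    then show ?thesis using assms by simp
  qed
  show "mode_xi (1, 1) (E0 \<xi>) = \<xi>/2" unfolding mode_xi_def using s by simp
  show "mode_xi (1, -1) (E0 \<xi>) = -\<xi>/2" unfolding mode_xi_def using s by simp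
  show "sqrt ((E0 \<xi>)\<^sup>2 - 2 * real (fst (1::nat, -1::int))) = \<xi>/2" using s by simp
qed

lemma Cpf_prod:
  assumes "\<xi> > 0"
  shows "Cpf 1 (E0 \<xi>) * Cpf (-1) (E0 \<xi>) = 1 / (sqrt 8 * E0 \<xi>)"
proof -
  note f = E0_facts[OF assms]
  define E where "E = E0 \<xi>"
  have E2: "E\<^sup>2 = \<xi>\<^sup>2/4 + 2" using f unfolding E_def by simp
  have Ep: "E > 0" using f unfolding E_def by simp
  have s: "sqrt (E\<^sup>2 - 2) = \<xi>/2" using f unfolding E_def by simp
  have "Cpf 1 E * Cpf (-1) E = (2 + (E - \<xi>/2)\<^sup>2) powr (-1/2) * (2 + (E + \<xi>/2)\<^sup>2) powr (-1/2)"
    unfolding Cpf_def mode_xi_def by (simp add: s)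
  also have "\<dots> = ((2 + (E - \<xi>/2)\<^sup>2) * (2 + (E + \<xi>/2)\<^sup>2)) powr (-1/2)"
    by (rule powr_mult[symmetric])
  also have "(2 + (E - \<xi>/2)\<^sup>2) * (2 + (E + \<xi>/2)\<^sup>2) = 8 * E\<^sup>2"
  proof -
    have "2 = E\<^sup>2 - (\<xi>/2)\<^sup>2" using E2 by (simp add: power_divide)
    then have "(2 + (E - \<xi>/2)\<^sup>2) * (2 + (E + \<xi>/2)\<^sup>2) = (E\<^sup>2 - (\<xi>/2)\<^sup>2 + (E - \<xi>/2)\<^sup>2) * (E\<^sup>2 - (\<xi>/2)\<^sup>2 + (E + \<xi>/2)\<^sup>2)"
      by simp
    also have "\<dots> = 4 * E\<^sup>2 * (E\<^sup>2 - (\<xi>/2)\<^sup>2)" by (simp add: algebra_simps power2_eq_square)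
    also have "\<dots> = 8 * E\<^sup>2" using \<open>2 = _\<close> by simp
    finally show ?thesis .
  qed
  also have "(8 * E\<^sup>2) powr (-1/2) = 1 / (sqrt 8 * E)"
    using Ep by (simp add: powr_minus_divide powr_half_sqrt real_sqrt_mult)
  finally show ?thesis unfolding E_def .
qed

lemma S0:
  assumes "\<xi> > 0"
  shows "Stilde \<xi> n a 0 = \<i> * (\<Sum>k\<le>2. AA n a k * complex_of_real (Phi ([:1,0,2:] * hp (sqrt 2) k) / R k))"
proof -
  note f = E0_facts[OF assms]
  define E where "E = E0 \<xi>"
  have d: "(E - mode_xi (1, 1) E) * (E - mode_xi (1, -1) E) = 2"
  proof -
    have s: "sqrt (E\<^sup>2 - 2) = \<xi>/2" using f unfolding E_def by simp
    have "(E - \<xi>/2) * (E + \<xi>/2) = E\<^sup>2 - (\<xi>/2)\<^sup>2" by (simp add: algebra_simps power2_eq_square)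
    then have "(E - \<xi>/2) * (E + \<xi>/2) = 2" using f unfolding E_def by (simp add: power_divide)
    then show ?thesis unfolding mode_xi_def by (simp add: s)
  qed
  have I: "\<And>k. (LBINT y. mode_inner (1, 1) (1, -1) E y * hermite_resc k y) =
      (2 * Cpf 1 E * Cpf (-1) E) * (Phi ([:1,0,2:] * hp (sqrt 2) k) / R k)"
    using int_0[OF d] by simp
  have Z: "\<And>k. k > 2 \<Longrightarrow> Phi ([:1,0,2:] * hp (sqrt 2) k) / R k = 0"
    unfolding K0_val by simp
  have SL: "Slin n a (1, 1) (1, -1) E = \<i> * complex_of_real (E / sqrt (E\<^sup>2 - 2 * real (fst (1::nat, -1::int))) * (2 * Cpf 1 E * Cpf (-1) E)) *
      (\<Sum>k\<le>2. AA n a k * complex_of_real (Phi ([:1,0,2:] * hp (sqrt 2) k) / R k))"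
    by (rule Slin_eq[OF I Z])
  have r: "sqrt 2 / 2 * \<xi> * (E / sqrt (E\<^sup>2 - 2 * real (fst (1::nat, -1::int))) * (2 * Cpf 1 E * Cpf (-1) E)) = 1"
  proof -
    have "sqrt 8 = sqrt (4 * 2::real)" by simp
    also have "\<dots> = 2 * sqrt 2" unfolding real_sqrt_mult by simp
    finally have s8: "sqrt 8 = 2 * sqrt (2::real)" .
    have s: "sqrt (E\<^sup>2 - 2 * real (fst (1::nat, -1::int))) = \<xi>/2" using f unfolding E_def by simp
    have cp: "Cpf 1 E * Cpf (-1) E = 1 / (sqrt 8 * E)" using Cpf_prod[OF assms] unfolding E_def .
    have Ep: "E > 0" using f unfolding E_def by simp
    have "sqrt 2 / 2 * \<xi> * (E / sqrt (E\<^sup>2 - 2 * real (fst (1::nat, -1::int))) * (2 * Cpf 1 E * Cpf (-1) E))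
       = sqrt 2 / 2 * \<xi> * (E / (\<xi>/2) * (2 * (1 / (2 * sqrt 2 * E))))"
      unfolding s mult.assoc[of 2] cp s8 by simp
    also have "\<dots> = 1" using Ep assms by (simp add: field_simps)
    finally show ?thesis .
  qed
  have "Stilde \<xi> n a 0 = complex_of_real (sqrt 2 / 2 * \<xi>) * Slin n a (1, 1) (1, -1) E"
    unfolding Stilde_def E_def by simp
  also have "\<dots> = \<i> * complex_of_real (sqrt 2 / 2 * \<xi> * (E / sqrt (E\<^sup>2 - 2 * real (fst (1::nat, -1::int))) * (2 * Cpf 1 E * Cpf (-1) E))) *
      (\<Sum>k\<le>2. AA n a k * complex_of_real (Phi ([:1,0,2:] * hp (sqrt 2) k) / R k))"
    unfolding SL of_real_mult by (simp only: ac_simps)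
  also have "\<dots> = \<i> * (\<Sum>k\<le>2. AA n a k * complex_of_real (Phi ([:1,0,2:] * hp (sqrt 2) k) / R k))"
    unfolding r by simp
  finally show ?thesis .
qed



lemma Es_val:
  assumes "\<xi> > 0"
  shows "Es \<xi> s = \<xi>/2 + real s/\<xi>" "(Es \<xi> s)\<^sup>2 - 2 * real s = (\<xi>/2 - real s/\<xi>)\<^sup>2"
proof -
  have e: "\<xi>\<^sup>2 / 4 + real s + (real s)\<^sup>2 / \<xi>\<^sup>2 = (\<xi>/2 + real s/\<xi>)\<^sup>2"
    using assms by (simp add: power2_eq_square field_simps)
  have p: "\<xi>/2 + real s/\<xi> > 0" using assms by (simp add: add_pos_nonneg)
  show a: "Es \<xi> s = \<xi>/2 + real s/\<xi>" unfolding Es_def e using p by simp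
  show "(Es \<xi> s)\<^sup>2 - 2 * real s = (\<xi>/2 - real s/\<xi>)\<^sup>2"
    unfolding a using assms by (simp add: power2_eq_square field_simps)
qed

lemma Ss_gen:
  assumes xi: "\<xi> > 0" and s: "s > 0" and mx: "mode_xi (s, e) (Es \<xi> s) = \<xi>/2 - real s/\<xi>"
  shows "complex_of_real (sqrt (1 + \<xi>\<^sup>2 / (2 * real s))) * Slin n a (s, e) (0, -1) (Es \<xi> s)
     = \<i> * (\<Sum>k\<le>s. AA n a k * complex_of_real (Phi (hp 1 s * hp (sqrt 2) k) / (R s * R k)))"
proof -
  define E where "E = Es \<xi> s"
  have Ev: "E = \<xi>/2 + real s/\<xi>" unfolding E_def using Es_val[OF xi] by simp
  have Ep: "E > 0" unfolding Ev using xi by (simp add: add_pos_nonneg)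
  have I: "\<And>k. (LBINT y. mode_inner (s, e) (0, -1) E y * hermite_resc k y) =
      CCf s e E * (Phi (hp 1 s * hp (sqrt 2) k) / (R s * R k))"
    using int_s[of s e E] s by simp
  have Z: "\<And>k. k > s \<Longrightarrow> Phi (hp 1 s * hp (sqrt 2) k) / (R s * R k) = 0"
    unfolding K_val by simp
  have SL: "Slin n a (s, e) (0, -1) E = \<i> * complex_of_real (E / sqrt (E\<^sup>2 - 2 * real (fst (0::nat, -1::int))) * CCf s e E) *
      (\<Sum>k\<le>s. AA n a k * complex_of_real (Phi (hp 1 s * hp (sqrt 2) k) / (R s * R k)))"
    by (rule Slin_eq[OF I Z])
  have r: "sqrt (1 + \<xi>\<^sup>2 / (2 * real s)) * (E / sqrt (E\<^sup>2 - 2 * real (fst (0::nat, -1::int))) * CCf s e E) = 1"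
  proof -
    have mx': "mode_xi (s, e) E = \<xi>/2 - real s/\<xi>" using mx unfolding E_def .
    have "E - mode_xi (s, e) E = (\<xi>/2 + real s/\<xi>) - (\<xi>/2 - real s/\<xi>)" by (simp only: mx') (simp only: Ev)
    also have "\<dots> = 2 * real s / \<xi>" by (simp add: field_simps)
    finally have d: "E - mode_xi (s, e) E = 2 * real s / \<xi>" .
    have q: "E / sqrt (E\<^sup>2 - 2 * real (fst (0::nat, -1::int))) = 1" using Ep by simp
    define t where "t = 2 * real s / \<xi>"
    have tp: "t > 0" unfolding t_def using xi s by simp
    have CC: "CCf s e E = (2 * real s + t\<^sup>2) powr (-1/2) * t" unfolding CCf_def d t_def using xi by simp
    have "sqrt (1 + \<xi>\<^sup>2 / (2 * real s)) * t = sqrt ((1 + \<xi>\<^sup>2 / (2 * real s)) * t\<^sup>2)"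
      using tp by (simp add: real_sqrt_mult)
    also have "(1 + \<xi>\<^sup>2 / (2 * real s)) * t\<^sup>2 = 2 * real s + t\<^sup>2"
      unfolding t_def using xi s by (simp add: field_simps power2_eq_square)
    finally have w: "sqrt (1 + \<xi>\<^sup>2 / (2 * real s)) * t = sqrt (2 * real s + t\<^sup>2)" .
    have pos: "2 * real s + t\<^sup>2 > 0" using s by (simp add: add_pos_nonneg)
    have "sqrt (1 + \<xi>\<^sup>2 / (2 * real s)) * (E / sqrt (E\<^sup>2 - 2 * real (fst (0::nat, -1::int))) * CCf s e E)
        = (2 * real s + t\<^sup>2) powr (-1/2) * (sqrt (1 + \<xi>\<^sup>2 / (2 * real s)) * t)"
      unfolding q CC by simp
    also have "\<dots> = (2 * real s + t\<^sup>2) powr (-1/2) * sqrt (2 * real s + t\<^sup>2)" unfolding w ..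
    also have "\<dots> = 1" using pos by (simp add: powr_minus_divide powr_half_sqrt)
    finally show ?thesis .
  qed
  have "complex_of_real (sqrt (1 + \<xi>\<^sup>2 / (2 * real s))) * Slin n a (s, e) (0, -1) E =
     \<i> * complex_of_real (sqrt (1 + \<xi>\<^sup>2 / (2 * real s)) * (E / sqrt (E\<^sup>2 - 2 * real (fst (0::nat, -1::int))) * CCf s e E)) *
      (\<Sum>k\<le>s. AA n a k * complex_of_real (Phi (hp 1 s * hp (sqrt 2) k) / (R s * R k)))"
    unfolding SL of_real_mult by (simp only: ac_simps)
  also have "\<dots> = \<i> * (\<Sum>k\<le>s. AA n a k * complex_of_real (Phi (hp 1 s * hp (sqrt 2) k) / (R s * R k)))"
    unfolding r by simp
  finally show ?thesis unfolding E_def .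
qed

lemma Ss:
  assumes xi: "\<xi> > 0" and s: "s > 0" and ne: "\<forall>k::nat. 0 < k \<longrightarrow> \<xi> \<noteq> sqrt (2 * real k)"
  shows "Stilde \<xi> n a s = \<i> * (\<Sum>k\<le>s. AA n a k * complex_of_real (Phi (hp 1 s * hp (sqrt 2) k) / (R s * R k)))"
proof -
  have sq: "sqrt ((Es \<xi> s)\<^sup>2 - 2 * real s) = \<bar>\<xi>/2 - real s/\<xi>\<bar>" using Es_val(2)[OF xi] by simp
  show ?thesis
  proof (cases "real s < \<xi>\<^sup>2 / 2")
    case True
    have "real s / \<xi> < \<xi> / 2" using True xi by (simp add: field_simps power2_eq_square)
    then have mx: "mode_xi (s, 1) (Es \<xi> s) = \<xi>/2 - real s/\<xi>" unfolding mode_xi_def using s sq by simp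
    show ?thesis unfolding Stilde_def using s True Ss_gen[OF xi s mx] by simp
  next
    case False
    have "real s \<noteq> \<xi>\<^sup>2 / 2"
    proof
      assume h: "real s = \<xi>\<^sup>2 / 2"
      then have "2 * real s = \<xi>\<^sup>2" by simp
      then have "sqrt (2 * real s) = sqrt (\<xi>\<^sup>2)" by simp
      then have "\<xi> = sqrt (2 * real s)" using xi by simp
      then show False using ne s by auto
    qed
    then have "real s > \<xi>\<^sup>2 / 2" using False by simp
    then have "real s / \<xi> > \<xi> / 2" using xi by (simp add: field_simps power2_eq_square)
    then have mx: "mode_xi (s, -1) (Es \<xi> s) = \<xi>/2 - real s/\<xi>" unfolding mode_xi_def using s sq by simp
    show ?thesis unfolding Stilde_def using s False Ss_gen[OF xi s mx] by simp
  qed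
qed



definition ca :: "nat \<Rightarrow> real" where "ca j = \<bar>cf j\<bar>"
definition cfp :: "nat \<Rightarrow> real" where "cfp j = (if j = 0 then 0 else cf j)"

lemma cf0: "cf 0 = 1" by (simp add: cf_def)
lemma cf1: "cf (Suc 0) = 0" by (simp add: cf_def)
lemma cf2: "cf 2 = -1/2" by (simp add: cf_def)

lemma ca_nonneg: "ca j \<ge> 0" by (simp add: ca_def)

lemma ca_sums: "ca sums exp (1/2)"
proof -
  have e: "ca (2 * i) = (1/2::real) ^ i /\<^sub>R fact i" for i
  proof -
    have "ca (2 * i) = \<bar>(-1/2::real) ^ i / fact i\<bar>" by (simp add: ca_def cf_def)
    also have "\<dots> = (1/2) ^ i / fact i"
      by (simp only: abs_divide power_abs abs_of_nonneg[OF fact_ge_zero] abs_minus_cancel abs_divide abs_one abs_numeral)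
    also have "\<dots> = (1/2::real) ^ i /\<^sub>R fact i"
      by (simp only: real_scaleR_def divide_inverse mult.commute)
    finally show ?thesis .
  qed
  have "(\<lambda>i. ca (2 * i)) sums exp (1/2)" unfolding e using exp_converges[of "1/2::real"] .
  moreover have "strict_mono (\<lambda>i::nat. 2 * i)" by (auto simp: strict_mono_def)
  moreover have "ca j = 0" if "j \<notin> range (\<lambda>i::nat. 2 * i)" for j
  proof -
    have "odd j"
    proof
      assume "even j"
      then obtain i where "j = 2 * i" by (rule evenE)
      then show False using that by auto
    qed
    then show ?thesis by (simp add: ca_def cf_def)
  qed
  ultimately show ?thesis using sums_mono_reindex[of "\<lambda>i::nat. 2 * i" ca] by simp
qed

lemma cap_sums: "(\<lambda>j. \<bar>cfp j\<bar>) sums (exp (1/2) - 1)"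
proof -
  have "(\<lambda>j. ca j - (if j = 0 then ca j else 0)) sums (exp (1/2) - ca 0)"
    by (intro sums_diff ca_sums sums_single)
  moreover have "(\<lambda>j. ca j - (if j = 0 then ca j else 0)) = (\<lambda>j. \<bar>cfp j\<bar>)"
    by (auto simp: fun_eq_iff ca_def cfp_def)
  moreover have "ca 0 = 1" by (simp add: ca_def cf0)
  ultimately show ?thesis by simp
qed

lemma exp_half_lt: "exp (1/2::real) < 5/3"
proof (rule ccontr)
  assume "\<not> exp (1/2::real) < 5/3"
  then have h: "5/3 \<le> exp (1/2::real)" by simp
  have "exp (1::real) = exp (1/2) * exp (1/2)" by (simp flip: exp_add)
  also have "\<dots> \<ge> 5/3 * (5/3)" using h by (intro mult_mono) auto
  finally have "exp (1::real) \<ge> 25/9" by simp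
  then show False using e_less_272 by simp
qed

lemma conv_sums:
  fixes x y :: "nat \<Rightarrow> real"
  assumes "x sums X" "y sums Y" "\<And>k. x k \<ge> 0" "\<And>k. y k \<ge> 0"
  shows "(\<lambda>s. \<Sum>k\<le>s. x k * y (s - k)) sums (X * Y)"
proof -
  have sx: "summable (\<lambda>k. norm (x k))" using assms(1,3) by (simp add: sums_summable[OF assms(1)])
  have sy: "summable (\<lambda>k. norm (y k))" using assms(2,4) by (simp add: sums_summable[OF assms(2)])
  show ?thesis using Cauchy_product_sums[OF sx sy]
    unfolding sums_unique[OF assms(1), symmetric] sums_unique[OF assms(2), symmetric] .
qed



lemma core:
  fixes b :: "nat \<Rightarrow> complex" and n :: enat
  assumes sb: "summable (\<lambda>s. cmod (b s))" and n1: "1 \<le> n"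
    and bz: "\<And>s. \<not> enat s \<le> n \<Longrightarrow> b s = 0"
  defines "u \<equiv> \<lambda>s. \<Sum>k\<le>s. complex_of_real (cf (s - k)) * b k"
  defines "P \<equiv> \<lambda>s. if enat s \<le> n then (if s = 0 then cmod (3/2 * b 0 + b 2) else cmod (u s)) else 0"
  shows "summable P \<and> suminf (\<lambda>s. cmod (b s)) \<le> 6 * suminf P \<and> suminf P \<le> 5 * suminf (\<lambda>s. cmod (b s))"
proof -
  define T where "T = suminf (\<lambda>s. cmod (b s))"
  define E where "E = exp (1/2::real)"
  have bsum: "(\<lambda>s. cmod (b s)) sums T" unfolding T_def using sb by (rule summable_sums)
  have T0: "T \<ge> 0" unfolding T_def by (rule suminf_nonneg[OF sb]) simp
  have E53: "E < 5/3" unfolding E_def by (rule exp_half_lt)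
  define v where "v = (\<lambda>s. \<Sum>k\<le>s. cmod (b k) * ca (s - k))"
  have vsum: "v sums (T * E)" unfolding v_def E_def
    by (rule conv_sums[OF bsum ca_sums]) (simp_all add: ca_nonneg)
  define w where "w = (\<lambda>s. \<Sum>k\<le>s. cmod (b k) * \<bar>cfp (s - k)\<bar>)"
  have wsum: "w sums (T * (E - 1))" unfolding w_def E_def
    by (rule conv_sums[OF bsum cap_sums]) simp_all
  have v0: "v s \<ge> 0" for s unfolding v_def by (intro sum_nonneg mult_nonneg_nonneg) (simp_all add: ca_nonneg)
  have uv: "cmod (u s) \<le> v s" for s
  proof -
    have "cmod (u s) \<le> (\<Sum>k\<le>s. cmod (complex_of_real (cf (s - k)) * b k))"
      unfolding u_def by (rule norm_sum)
    also have "\<dots> = v s" unfolding v_def by (simp add: norm_mult ca_def mult.commute)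
    finally show ?thesis .
  qed
  have P0: "P s \<ge> 0" for s unfolding P_def by simp
  have Pv: "P s \<le> v s" if "s \<ge> 1" for s using that uv v0 unfolding P_def by auto
  have sP: "summable P"
    by (rule summable_comparison_test'[OF sums_summable[OF vsum], of 1]) (simp add: P0 Pv)
  define c0 where "c0 = 3/2 * cmod (b 0) + cmod (b 2)"
  have c0T: "c0 \<le> 3/2 * T"
  proof -
    have "sum (\<lambda>s. cmod (b s)) {0, 2} \<le> T" unfolding T_def by (rule sum_le_suminf[OF sb]) auto
    then have "cmod (b 0) + cmod (b 2) \<le> T" by simp
    then show ?thesis unfolding c0_def using norm_ge_zero[of "b 2"] by linarith
  qed
  define g where "g = (\<lambda>s. v s + (if s = 0 then c0 else 0))"
  have gsum: "g sums (T * E + c0)" unfolding g_def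
    by (intro sums_add vsum) (rule sums_single[of 0 "\<lambda>_. c0", simplified])
  have Pg: "P s \<le> g s" for s
  proof (cases "s = 0")
    case True
    have "cmod (3/2 * b 0 + b 2) \<le> cmod (3/2 * b 0) + cmod (b 2)" by (rule norm_triangle_ineq)
    also have "\<dots> = c0" unfolding c0_def by (simp add: norm_mult)
    finally have "cmod (3/2 * b 0 + b 2) \<le> c0" .
    moreover have "c0 \<ge> 0" unfolding c0_def by simp
    ultimately show ?thesis using True v0[of 0] unfolding P_def g_def by auto
  next
    case False then show ?thesis using Pv[of s] unfolding g_def by simp
  qed
  have up: "suminf P \<le> T * E + c0"
    using suminf_le[OF Pg sP sums_summable[OF gsum]] sums_unique[OF gsum] by simp
  have up2: "suminf P \<le> 5 * T"
  proof -
    have "T * E \<le> T * (5/3)" using T0 E53 by (intro mult_left_mono) auto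
    then show ?thesis using up c0T T0 by linarith
  qed
  define X0 where "X0 = cmod (3/2 * b 0 + b 2)"
  define Pq where "Pq = (\<lambda>s. if s \<noteq> 0 \<and> enat s \<le> n then cmod (u s) else 0)"
  have Pq0: "Pq s \<ge> 0" for s unfolding Pq_def by simp
  have sPq: "summable Pq"
    by (rule summable_comparison_test'[OF sums_summable[OF vsum], of 0]) (use uv v0 in \<open>simp add: Pq_def\<close>)
  define Q where "Q = suminf Pq"
  have Q0: "Q \<ge> 0" unfolding Q_def by (rule suminf_nonneg[OF sPq Pq0])
  have PX: "P = (\<lambda>s. (if s = 0 then X0 else 0) + Pq s)"
    using n1 by (auto simp: fun_eq_iff P_def Pq_def X0_def zero_enat_def[symmetric])
  have sumP: "suminf P = X0 + Q"
  proof -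
    have "P sums (X0 + Q)" unfolding PX Q_def
      by (intro sums_add summable_sums[OF sPq]) (rule sums_single[of 0 "\<lambda>_. X0", simplified])
    then show ?thesis by (rule sums_unique[symmetric])
  qed
  have ub: "u s = b s + (\<Sum>k\<le>s. complex_of_real (cfp (s - k)) * b k)" for s
  proof -
    have "u s = (\<Sum>k\<le>s. complex_of_real (cfp (s - k)) * b k + (if k = s then b k else 0))"
      unfolding u_def by (intro sum.cong refl) (auto simp: cfp_def cf0)
    also have "\<dots> = (\<Sum>k\<le>s. complex_of_real (cfp (s - k)) * b k) + b s"
      by (simp add: sum.distrib)
    finally show ?thesis by simp
  qed
  have bw: "cmod (b s) \<le> cmod (u s) + w s" for s
  proof -
    have "cmod (b s) \<le> cmod (u s) + cmod (\<Sum>k\<le>s. complex_of_real (cfp (s - k)) * b k)"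
      using norm_triangle_ineq4[of "u s" "\<Sum>k\<le>s. complex_of_real (cfp (s - k)) * b k"] unfolding ub by simp
    also have "cmod (\<Sum>k\<le>s. complex_of_real (cfp (s - k)) * b k) \<le> w s"
    proof -
      have "cmod (\<Sum>k\<le>s. complex_of_real (cfp (s - k)) * b k) \<le> (\<Sum>k\<le>s. cmod (complex_of_real (cfp (s - k)) * b k))"
        by (rule norm_sum)
      also have "\<dots> = w s" unfolding w_def by (simp add: norm_mult mult.commute)
      finally show ?thesis .
    qed
    finally show ?thesis by simp
  qed
  have w0: "w s \<ge> 0" for s unfolding w_def by (intro sum_nonneg mult_nonneg_nonneg) simp_all
  define h where "h = (\<lambda>s. (if s = 0 then cmod (b 0) else 0) + (Pq s + w s))"
  have hsum: "h sums (cmod (b 0) + (Q + T * (E - 1)))" unfolding h_def Q_def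
    by (intro sums_add summable_sums[OF sPq] wsum) (rule sums_single[of 0 "\<lambda>_. cmod (b 0)", simplified])
  have bh: "cmod (b s) \<le> h s" for s
  proof (cases "s = 0")
    case True then show ?thesis unfolding h_def using w0[of 0] Pq0[of 0] by simp
  next
    case False
    show ?thesis
    proof (cases "enat s \<le> n")
      case True then show ?thesis using bw[of s] False unfolding h_def Pq_def by simp
    next
      case nle: False then show ?thesis using bz[OF nle] w0[of s] Pq0[of s] unfolding h_def by simp
    qed
  qed
  have Tle: "T \<le> cmod (b 0) + (Q + T * (E - 1))"
    using suminf_le[OF bh sb sums_summable[OF hsum]] sums_unique[OF hsum] unfolding T_def by simp
  have b0: "cmod (b 0) \<le> X0 + Q"
  proof (cases "enat 2 \<le> n")
    case True
    have u2: "u 2 = b 2 - 1/2 * b 0"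
      unfolding u_def by (simp add: numeral_2_eq_2 cf0 cf1 cf2[unfolded numeral_2_eq_2])
    have "Pq 2 \<le> Q" unfolding Q_def using sum_le_suminf[OF sPq, of "{2}"] Pq0 by simp
    then have u2Q: "cmod (u 2) \<le> Q" using True unfolding Pq_def by simp
    have "2 * b 0 = (3/2 * b 0 + b 2) - u 2" unfolding u2 by simp
    then have "cmod (2 * b 0) \<le> X0 + cmod (u 2)" unfolding X0_def by (metis norm_triangle_ineq4)
    then have "2 * cmod (b 0) \<le> X0 + Q" using u2Q by (simp add: norm_mult)
    moreover have "X0 \<ge> 0" unfolding X0_def by simp
    ultimately show ?thesis using Q0 by linarith
  next
    case False
    then have "b 2 = 0" by (rule bz)
    then have "X0 = 3/2 * cmod (b 0)" unfolding X0_def by (simp add: norm_mult)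
    then show ?thesis using Q0 norm_ge_zero[of "b 0"] by linarith
  qed
  have X00: "X0 \<ge> 0" unfolding X0_def by simp
  have e1: "T * (E - 1) = T * E - T" "T * (2 - E) = 2 * T - T * E" by (simp_all add: algebra_simps)
  have a1: "T \<le> cmod (b 0) + (Q + (T * E - T))" using Tle unfolding e1(1) .
  have a2: "2 * T - T * E \<le> 2 * (X0 + Q)" using a1 b0 Q0 X00 by (smt (verit))
  have "T * (2 - E) \<le> 2 * suminf P" unfolding e1(2) sumP using a2 .
  moreover have "T * (1/3) \<le> T * (2 - E)" using T0 E53 by (intro mult_left_mono) auto
  ultimately have low: "T \<le> 6 * suminf P" by linarith
  show ?thesis using sP low up2 unfolding T_def by simp
qed



definition BB :: "enat \<Rightarrow> (nat \<Rightarrow> complex) \<Rightarrow> nat \<Rightarrow> complex" where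
  "BB n a k = (if enat k \<le> n then a k / complex_of_real (sqrt (fact k)) else 0)"

definition uu :: "enat \<Rightarrow> (nat \<Rightarrow> complex) \<Rightarrow> nat \<Rightarrow> complex" where
  "uu n a s = (\<Sum>k\<le>s. complex_of_real (cf (s - k)) * BB n a k)"

lemma BB_AA: "BB n a k = AA n a k / complex_of_real (sqrt (fact k))"
  unfolding BB_def AA_def by simp

lemma W0:
  assumes "\<xi> > 0"
  shows "Stilde \<xi> n a 0 = \<i> * (3/2 * BB n a 0 + BB n a 2)"
proof -
  have R2: "R 2 = 2 * sqrt 2"
  proof -
    have "R 2 = sqrt (4 * 2)" unfolding R_def by (simp add: numeral_2_eq_2)
    also have "\<dots> = 2 * sqrt 2" unfolding real_sqrt_mult by simp
    finally show ?thesis .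
  qed
  have f2: "sqrt (fact 2 :: real) = sqrt 2" by (simp add: numeral_2_eq_2)
  have "(\<Sum>k\<le>2. AA n a k * complex_of_real (Phi ([:1,0,2:] * hp (sqrt 2) k) / R k))
      = AA n a 0 * complex_of_real (3/2) + AA n a 2 * complex_of_real (2 / (2 * sqrt 2))"
    unfolding K0_val by (simp add: numeral_2_eq_2 R0 R2[unfolded numeral_2_eq_2])
  also have "\<dots> = 3/2 * BB n a 0 + BB n a 2"
    unfolding BB_AA f2 by (simp add: field_simps)
  finally show ?thesis using S0[OF assms] by simp
qed

lemma pow2_half: "2 powr (real s / 2) = sqrt (2 ^ s)"
proof -
  have "2 powr (real s / 2) = (2 powr real s) powr (1/2)" by (simp add: powr_powr)
  also have "\<dots> = sqrt (2 ^ s)" by (simp add: powr_half_sqrt powr_realpow)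
  finally show ?thesis .
qed

lemma coef_eq: "sqrt 2 ^ k * fact s / (R s * R k) = sqrt (fact s) / (2 powr (real s / 2) * sqrt (fact k))"
proof -
  have a: "R s = sqrt (2 ^ s) * sqrt (fact s)" unfolding R_def by (simp add: real_sqrt_mult)
  have b: "R k = sqrt 2 ^ k * sqrt (fact k)" unfolding R_def by (simp add: real_sqrt_mult real_sqrt_power)
  have c: "fact s = sqrt (fact s) * (sqrt (fact s) :: real)" by simp
  have p1: "sqrt (fact s :: real) > 0" "sqrt (fact k :: real) > 0" "sqrt (2::real) ^ k > 0" "sqrt (2 ^ s :: real) > 0"
    by simp_all
  show ?thesis unfolding a b pow2_half using p1
    by (subst c) (simp add: field_simps)
qed

lemma Ws:
  assumes xi: "\<xi> > 0" and s: "s > 0" and ne: "\<forall>k::nat. 0 < k \<longrightarrow> \<xi> \<noteq> sqrt (2 * real k)"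
  shows "Stilde \<xi> n a s = \<i> * complex_of_real (sqrt (fact s) / 2 powr (real s / 2)) * uu n a s"
proof -
  have "(\<Sum>k\<le>s. AA n a k * complex_of_real (Phi (hp 1 s * hp (sqrt 2) k) / (R s * R k)))
      = (\<Sum>k\<le>s. complex_of_real (sqrt (fact s) / 2 powr (real s / 2)) * (complex_of_real (cf (s - k)) * BB n a k))"
  proof (rule sum.cong[OF refl])
    fix k assume "k \<in> {..s}"
    then have ks: "k \<le> s" by simp
    have "Phi (hp 1 s * hp (sqrt 2) k) / (R s * R k) = sqrt 2 ^ k * fact s / (R s * R k) * cf (s - k)"
      unfolding K_val using ks by simp
    also have "\<dots> = sqrt (fact s) / 2 powr (real s / 2) * cf (s - k) / sqrt (fact k)"
      unfolding coef_eq by simp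
    finally have e: "Phi (hp 1 s * hp (sqrt 2) k) / (R s * R k) = sqrt (fact s) / 2 powr (real s / 2) * cf (s - k) / sqrt (fact k)" .
    show "AA n a k * complex_of_real (Phi (hp 1 s * hp (sqrt 2) k) / (R s * R k)) =
      complex_of_real (sqrt (fact s) / 2 powr (real s / 2)) * (complex_of_real (cf (s - k)) * BB n a k)"
      unfolding e BB_AA by (simp add: field_simps)
  qed
  then show ?thesis unfolding Ss[OF xi s ne] uu_def by (simp add: sum_distrib_left mult.assoc)
qed



lemma normV_BB: "normV n a = (\<Sum>s. ennreal (cmod (BB n a s)))"
  unfolding normV_def BB_def by (intro arg_cong[where f=suminf]) (auto simp: fun_eq_iff norm_divide)

definition Pf :: "enat \<Rightarrow> (nat \<Rightarrow> complex) \<Rightarrow> nat \<Rightarrow> real" where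
  "Pf n a s = (if enat s \<le> n then (if s = 0 then cmod (3/2 * BB n a 0 + BB n a 2) else cmod (uu n a s)) else 0)"

lemma weight:
  assumes xi: "\<xi> > 0" and ne: "\<forall>k::nat. 0 < k \<longrightarrow> \<xi> \<noteq> sqrt (2 * real k)"
  shows "2 powr (real s / 2) * cmod (Stilde \<xi> n a s) / sqrt (fact s) =
     (if s = 0 then cmod (3/2 * BB n a 0 + BB n a 2) else cmod (uu n a s))"
proof (cases "s = 0")
  case True then show ?thesis using W0[OF xi] by (simp add: norm_mult)
next
  case False
  have c: "sqrt (fact s) / 2 powr (real s / 2) > 0" by simp
  have sp: "s > 0" using False by simp
  have "cmod (Stilde \<xi> n a s) = (sqrt (fact s) / 2 powr (real s / 2)) * cmod (uu n a s)"
    using False c unfolding Ws[OF xi sp ne, of n a]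
    by (simp only: norm_mult norm_of_real abs_of_pos[OF c]) simp
  then show ?thesis using False by (simp add: field_simps)
qed

lemma normS_Pf:
  assumes xi: "\<xi> > 0" and ne: "\<forall>k::nat. 0 < k \<longrightarrow> \<xi> \<noteq> sqrt (2 * real k)"
  shows "normS n (Stilde \<xi> n a) = (\<Sum>s. ennreal (Pf n a s))"
  unfolding normS_def Pf_def weight[OF xi ne] by (intro arg_cong[where f=suminf]) (auto simp: fun_eq_iff)

lemma core_inst:
  assumes sb: "summable (\<lambda>s. cmod (BB n a s))" and n1: "1 \<le> n"
  shows "summable (Pf n a) \<and> suminf (\<lambda>s. cmod (BB n a s)) \<le> 6 * suminf (Pf n a) \<and> suminf (Pf n a) \<le> 5 * suminf (\<lambda>s. cmod (BB n a s))"
proof -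
  have bz: "\<And>s. \<not> enat s \<le> n \<Longrightarrow> BB n a s = 0" by (simp add: BB_def)
  have e: "Pf n a = (\<lambda>s. if enat s \<le> n then (if s = 0 then cmod (3/2 * BB n a 0 + BB n a 2)
      else cmod ((\<lambda>s. \<Sum>k\<le>s. complex_of_real (cf (s - k)) * BB n a k) s)) else 0)"
    by (simp add: fun_eq_iff Pf_def uu_def)
  show ?thesis unfolding e by (rule core[OF sb n1 bz])
qed



lemma BB_diff: "BB n (\<lambda>k. a k - b k) k = BB n a k - BB n b k"
  unfolding BB_def by (simp add: diff_divide_distrib)

lemma uu_diff: "uu n (\<lambda>k. a k - b k) s = uu n a s - uu n b s"
  unfolding uu_def BB_diff by (simp add: right_diff_distrib sum_subtractf)

lemma Stilde_diff:
  assumes xi: "\<xi> > 0" and ne: "\<forall>k::nat. 0 < k \<longrightarrow> \<xi> \<noteq> sqrt (2 * real k)"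
  shows "Stilde \<xi> n (\<lambda>k. a k - b k) s = Stilde \<xi> n a s - Stilde \<xi> n b s"
proof (cases "s = 0")
  case True then show ?thesis unfolding True W0[OF xi] BB_diff by (simp add: algebra_simps)
next
  case False
  then have sp: "s > 0" by simp
  show ?thesis unfolding Ws[OF xi sp ne] uu_diff by (simp only: right_diff_distrib)
qed

lemma summable_BB:
  assumes "normV n a < top"
  shows "summable (\<lambda>s. cmod (BB n a s))"
  using assms unfolding normV_BB by (intro summable_suminf_not_top) auto

lemma Pf_alt:
  assumes xi: "\<xi> > 0" and ne: "\<forall>k::nat. 0 < k \<longrightarrow> \<xi> \<noteq> sqrt (2 * real k)"
  shows "Pf n a s = (if enat s \<le> n then 2 powr (real s / 2) * cmod (Stilde \<xi> n a s) / sqrt (fact s) else 0)"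
  unfolding Pf_def weight[OF xi ne] by simp

lemma injective:
  assumes xi: "\<xi> > 0" and ne: "\<forall>k::nat. 0 < k \<longrightarrow> \<xi> \<noteq> sqrt (2 * real k)" and n1: "1 \<le> n"
    and fa: "normV n a < top" and fb: "normV n b < top"
    and eq: "\<forall>s. enat s \<le> n \<longrightarrow> Stilde \<xi> n a s = Stilde \<xi> n b s"
  shows "\<forall>k. enat k \<le> n \<longrightarrow> a k = b k"
proof -
  define d where "d = (\<lambda>k. a k - b k)"
  have sa: "summable (\<lambda>s. cmod (BB n a s))" by (rule summable_BB[OF fa])
  have sb: "summable (\<lambda>s. cmod (BB n b s))" by (rule summable_BB[OF fb])
  have sd: "summable (\<lambda>s. cmod (BB n d s))"
  proof (rule summable_comparison_test'[OF summable_add[OF sa sb], of 0])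
    fix s show "norm (cmod (BB n d s)) \<le> cmod (BB n a s) + cmod (BB n b s)"
      unfolding d_def BB_diff by (simp add: norm_triangle_ineq4)
  qed
  have P0: "Pf n d s = 0" for s
    unfolding Pf_alt[OF xi ne] d_def Stilde_diff[OF xi ne] using eq by simp
  have "suminf (Pf n d) = 0" unfolding P0 by simp
  then have le: "suminf (\<lambda>s. cmod (BB n d s)) \<le> 0" using core_inst[OF sd n1] by simp
  have "suminf (\<lambda>s. cmod (BB n d s)) = 0"
    using le suminf_nonneg[OF sd] by simp
  then have z: "\<forall>s. cmod (BB n d s) = 0" using suminf_eq_zero_iff[OF sd] by simp
  show ?thesis
  proof (intro allI impI)
    fix k assume k: "enat k \<le> n"
    have "BB n d k = 0" using z by simp
    then show "a k = b k" using k unfolding BB_def d_def by simp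
  qed
qed

function Bf :: "complex \<Rightarrow> (nat \<Rightarrow> complex) \<Rightarrow> nat \<Rightarrow> complex" where
  "Bf \<beta> U s = (if s = 0 then \<beta> else U s - (\<Sum>k\<in>{..<s}. complex_of_real (cf (s - k)) * Bf \<beta> U k))"
  by auto
termination by (relation "Wellfounded.measure (\<lambda>(\<beta>, U, s). s)") auto

declare Bf.simps[simp del]

lemma Bf0: "Bf \<beta> U 0 = \<beta>" by (subst Bf.simps) simp

lemma Bf_conv:
  assumes "s > 0"
  shows "(\<Sum>k\<le>s. complex_of_real (cf (s - k)) * Bf \<beta> U k) = U s"
proof -
  have "(\<Sum>k\<le>s. complex_of_real (cf (s - k)) * Bf \<beta> U k)
      = (\<Sum>k<s. complex_of_real (cf (s - k)) * Bf \<beta> U k) + Bf \<beta> U s"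
    by (simp add: lessThan_Suc_atMost[symmetric] cf0)
  also have "Bf \<beta> U s = U s - (\<Sum>k<s. complex_of_real (cf (s - k)) * Bf \<beta> U k)"
    using assms by (subst Bf.simps) simp
  finally show ?thesis by simp
qed

lemma Bf2: "Bf \<beta> U 2 = U 2 + \<beta> / 2"
proof -
  have "Bf \<beta> U 2 = U 2 - (\<Sum>k<2. complex_of_real (cf (2 - k)) * Bf \<beta> U k)"
    by (subst Bf.simps) simp
  also have "(\<Sum>k<2. complex_of_real (cf (2 - k)) * Bf \<beta> U k) = - \<beta> / 2"
    by (simp add: numeral_2_eq_2 lessThan_Suc cf1 cf2[unfolded numeral_2_eq_2] Bf0)
  finally show ?thesis by simp
qed

lemma surjective:
  assumes xi: "\<xi> > 0" and ne: "\<forall>k::nat. 0 < k \<longrightarrow> \<xi> \<noteq> sqrt (2 * real k)" and n1: "1 \<le> n"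
    and fin: "n \<noteq> \<infinity>"
  shows "\<exists>a. \<forall>s. enat s \<le> n \<longrightarrow> Stilde \<xi> n a s = t s"
proof -
  obtain N where nN: "n = enat N" using fin by (cases n) auto
  have N1: "N \<ge> 1" using n1 nN by (simp add: one_enat_def)
  define cs where "cs = (\<lambda>s. sqrt (fact s) / 2 powr (real s / 2))"
  have csp: "cs s > 0" for s unfolding cs_def by simp
  define X where "X = t 0 / \<i>"
  define U where "U = (\<lambda>s. t s / (\<i> * complex_of_real (cs s)))"
  define \<beta> where "\<beta> = (if 2 \<le> N then (X - U 2) / 2 else 2/3 * X)"
  define a where "a = (\<lambda>k. Bf \<beta> U k * complex_of_real (sqrt (fact k)))"
  have BBa: "BB n a k = Bf \<beta> U k" if "k \<le> N" for k
    using that unfolding BB_def a_def nN by simp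
  have uua: "uu n a s = U s" if "s \<le> N" "s > 0" for s
  proof -
    have "uu n a s = (\<Sum>k\<le>s. complex_of_real (cf (s - k)) * Bf \<beta> U k)"
      unfolding uu_def using that by (intro sum.cong refl) (simp add: BBa)
    also have "\<dots> = U s" by (rule Bf_conv[OF that(2)])
    finally show ?thesis .
  qed
  have "Stilde \<xi> n a s = t s" if s: "enat s \<le> n" for s
  proof (cases "s = 0")
    case False
    then have sp: "s > 0" by simp
    have sN: "s \<le> N" using s nN by simp
    have "Stilde \<xi> n a s = \<i> * complex_of_real (cs s) * U s"
      unfolding Ws[OF xi sp ne] uua[OF sN sp] cs_def ..
    also have "\<dots> = t s" unfolding U_def using csp[of s] by simp
    finally show ?thesis .
  next
    case True
    have B0: "BB n a 0 = \<beta>" using BBa[of 0] by (simp add: Bf0)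
    have "3/2 * BB n a 0 + BB n a 2 = X"
    proof (cases "2 \<le> N")
      case True
      have "BB n a 2 = U 2 + \<beta> / 2" using BBa[OF True] Bf2 by simp
      then show ?thesis unfolding B0 \<beta>_def using True by (simp add: field_simps)
    next
      case False
      have "BB n a 2 = 0" unfolding BB_def nN using False by simp
      then show ?thesis unfolding B0 \<beta>_def using False by (simp add: field_simps)
    qed
    then show ?thesis unfolding True W0[OF xi] X_def by simp
  qed
  then show ?thesis by blast
qed

lemma bounds:
  assumes n1: "1 \<le> n" and xi: "0 < \<xi>" and ne: "\<forall>k::nat. 0 < k \<longrightarrow> \<xi> \<noteq> sqrt (2 * real k)"
      and fa: "normV n a < top"
  shows "ennreal (1/6) * normV n a \<le> normS n (Stilde \<xi> n a) \<and> normS n (Stilde \<xi> n a) \<le> ennreal 5 * normV n a"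
proof -
  have sa: "summable (\<lambda>s. cmod (BB n a s))" by (rule summable_BB[OF fa])
  note c = core_inst[OF sa n1]
  define T where "T = suminf (\<lambda>s. cmod (BB n a s))"
  define S where "S = suminf (Pf n a)"
  have Pf0: "Pf n a s \<ge> 0" for s unfolding Pf_def by simp
  have V: "normV n a = ennreal T" unfolding normV_BB T_def by (rule suminf_ennreal2) (simp_all add: sa)
  have SS: "normS n (Stilde \<xi> n a) = ennreal S" unfolding normS_Pf[OF xi ne] S_def
    by (rule suminf_ennreal2) (simp_all add: Pf0 c)
  have T0: "T \<ge> 0" unfolding T_def by (rule suminf_nonneg[OF sa]) simp
  have l: "T \<le> 6 * S" and u: "S \<le> 5 * T" using c unfolding T_def S_def by auto
  have G1: "ennreal (1/6) * normV n a \<le> normS n (Stilde \<xi> n a)"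
    unfolding V SS using l T0 by (simp add: ennreal_mult[symmetric] ennreal_leI)
  have "ennreal S \<le> ennreal (5 * T)" using u by (rule ennreal_leI)
  also have "ennreal (5 * T) = ennreal 5 * ennreal T" using T0 by (simp add: ennreal_mult)
  finally have "ennreal S \<le> ennreal 5 * ennreal T" .
  then have G2: "normS n (Stilde \<xi> n a) \<le> ennreal 5 * normV n a"
    by (simp only: V SS)
  from G1 G2 show ?thesis by (rule conjI)
qed

theorem mainTheorem2:
  shows "(\<forall>(n::enat) (\<xi>::real). 1 \<le> n \<longrightarrow> 0 < \<xi> \<longrightarrow> (\<forall>k::nat. 0 < k \<longrightarrow> \<xi> \<noteq> sqrt (2 * real k)) \<longrightarrow>
            (\<forall>a b. normV n a < top \<longrightarrow> normV n b < top \<longrightarrow>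
               (\<forall>s. enat s \<le> n \<longrightarrow> Stilde \<xi> n a s = Stilde \<xi> n b s) \<longrightarrow>
               (\<forall>k. enat k \<le> n \<longrightarrow> a k = b k))
          \<and> (n \<noteq> \<infinity> \<longrightarrow> (\<forall>t. \<exists>a. \<forall>s. enat s \<le> n \<longrightarrow> Stilde \<xi> n a s = t s)))
   \<and> (\<exists>C1 C2::real. 0 < C1 \<and> 0 < C2 \<and>
        (\<forall>(n::enat) (\<xi>::real) a. 1 \<le> n \<longrightarrow> 0 < \<xi> \<longrightarrow> (\<forall>k::nat. 0 < k \<longrightarrow> \<xi> \<noteq> sqrt (2 * real k)) \<longrightarrow>
           normV n a < top \<longrightarrow>
           ennreal C1 * normV n a \<le> normS n (Stilde \<xi> n a) \<and>
           normS n (Stilde \<xi> n a) \<le> ennreal C2 * normV n a))"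
proof (intro conjI allI impI)
  fix n :: enat and \<xi> :: real and a b :: "nat \<Rightarrow> complex" and k :: nat
  assume "1 \<le> n" "0 < \<xi>" "\<forall>k::nat. 0 < k \<longrightarrow> \<xi> \<noteq> sqrt (2 * real k)"
    "normV n a < top" "normV n b < top" "\<forall>s. enat s \<le> n \<longrightarrow> Stilde \<xi> n a s = Stilde \<xi> n b s"
    "enat k \<le> n"
  then show "a k = b k" using injective[of \<xi> n a b] by blast
next
  fix n :: enat and \<xi> :: real and t :: "nat \<Rightarrow> complex"
  assume "1 \<le> n" "0 < \<xi>" "\<forall>k::nat. 0 < k \<longrightarrow> \<xi> \<noteq> sqrt (2 * real k)" "n \<noteq> \<infinity>"
  then show "\<exists>a. \<forall>s. enat s \<le> n \<longrightarrow> Stilde \<xi> n a s = t s" using surjective[of \<xi> n] by blast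
next
  show "\<exists>C1 C2::real. 0 < C1 \<and> 0 < C2 \<and>
        (\<forall>(n::enat) (\<xi>::real) a. 1 \<le> n \<longrightarrow> 0 < \<xi> \<longrightarrow> (\<forall>k::nat. 0 < k \<longrightarrow> \<xi> \<noteq> sqrt (2 * real k)) \<longrightarrow>
           normV n a < top \<longrightarrow>
           ennreal C1 * normV n a \<le> normS n (Stilde \<xi> n a) \<and>
           normS n (Stilde \<xi> n a) \<le> ennreal C2 * normV n a)"
    using bounds by (intro exI[of _ "1/6"] exI[of _ 5]) simp
qed


end
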